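(* Let $(M,g)$ be a four-dimensional globally hyperbolic analytic spacetime with metric of signature $(+,-,-,-)$, identified via an isometry-compatible diffeomorphism with $\mathbb{R}\times\Sigma$ so that $g=\beta\,dt^2-g_t$, where $\beta>0$ and each $g_t$ is a Riemannian metric on $\Sigma$. For $\varepsilon>0$ let $$g^\varepsilon \doteq (1-i\varepsilon)\,\beta\,dt^2-g_t,\qquad g^R\doteq \beta\,dt^2+g_t .$$ Then for every geodesically convex region $\Omega\subset M$, every $x\in\Omega$ and every $\xi\in T_x\Omega$, $$\hat C(\varepsilon)\,g^R_x(\xi,\xi)\;\le\;|g^\varepsilon_x(\xi,\xi)|\;\le\;\check C(\varepsilon)\,g^R_x(\xi,\xi),$$ where $$\hat C(\varepsilon)=\Big(\tfrac{1}{\varepsilon}+\sqrt{1+\tfrac{1}{\varepsilon^2}}\Big)^{-1},\qquad \check C(\varepsilon)=\sqrt{1+\varepsilon^2}.$$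
   Context: $g^\varepsilon$ is the analytic continuation of the metric $g$ obtained by multiplying the time-time component by $(1-i\varepsilon)$; $g^R$ is the associated Riemannian metric. For $\xi\in T_x M$ one writes $\xi_0=dt(\xi)$, so $g^\varepsilon_x(\xi,\xi)=(1-i\varepsilon)\beta\xi_0^2-g_t(\xi,\xi)$. *)

theory Defs
  imports "HOL-Analysis.Analysis"
begin

text \<open>A tangent vector at a point of M = R x Sigma (dim Sigma = 3) is modelled as a pair
  (xi0, v) with xi0 = dt(xi) and v the spatial (Sigma-) component.\<close>

definition riem_inner :: "('v::real_vector \<Rightarrow> 'v \<Rightarrow> real) \<Rightarrow> bool" where
  "riem_inner G \<longleftrightarrow> bilinear G \<and> (\<forall>u v. G u v = G v u) \<and> (\<forall>v. v \<noteq> 0 \<longrightarrow> G v v > 0)"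

definition g_eps :: "real \<Rightarrow> real \<Rightarrow> (real^3 \<Rightarrow> real^3 \<Rightarrow> real) \<Rightarrow> real \<times> (real^3) \<Rightarrow> complex" where
  "g_eps \<epsilon> \<beta> G \<xi> = (1 - \<i> * complex_of_real \<epsilon>) * complex_of_real (\<beta> * (fst \<xi>)^2)
      - complex_of_real (G (snd \<xi>) (snd \<xi>))"

definition g_R :: "real \<Rightarrow> (real^3 \<Rightarrow> real^3 \<Rightarrow> real) \<Rightarrow> real \<times> (real^3) \<Rightarrow> real" where
  "g_R \<beta> G \<xi> = \<beta> * (fst \<xi>)^2 + G (snd \<xi>) (snd \<xi>)"

definition C_hat :: "real \<Rightarrow> real" where
  "C_hat \<epsilon> = inverse (1 / \<epsilon> + sqrt (1 + 1 / \<epsilon>^2))"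

definition C_check :: "real \<Rightarrow> real" where
  "C_check \<epsilon> = sqrt (1 + \<epsilon>^2)"

end

theory Submission
  imports Defs
begin

lemma key_ineqs:
  fixes e a b :: real
  assumes e: "e > 0" and a: "a \<ge> 0" and b: "b \<ge> 0"
  shows "C_hat e * (a + b) \<le> cmod ((1 - \<i> * complex_of_real e) * complex_of_real a - complex_of_real b)
       \<and> cmod ((1 - \<i> * complex_of_real e) * complex_of_real a - complex_of_real b) \<le> C_check e * (a + b)"
proof -
  have cm: "cmod ((1 - \<i> * complex_of_real e) * complex_of_real a - complex_of_real b)
            = sqrt ((a - b)^2 + (e*a)^2)"
    by (simp add: cmod_def power2_eq_square algebra_simps)
  define s where "s = sqrt (1 + e^2)"
  have s1: "s \<ge> 1" unfolding s_def by simp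
  have ss: "s^2 = 1 + e^2" unfolding s_def by (simp add: add_pos_nonneg)
  have Ch: "C_hat e = e / (1 + s)"
  proof -
    have "1/e + sqrt (1 + 1/e^2) = (1 + s)/e"
    proof -
      have "1 + 1/e^2 = (1 + e^2)/e^2" using e by (simp add: field_simps)
      hence "sqrt (1 + 1/e^2) = s / e" using e by (simp add: s_def real_sqrt_divide)
      thus ?thesis by (simp add: add_divide_distrib)
    qed
    thus ?thesis unfolding C_hat_def using e s1 by (simp add: field_simps)
  qed
  have C0: "C_hat e \<ge> 0" using Ch e s1 by simp
  have lowsq: "(C_hat e * (a+b))^2 \<le> (a - b)^2 + (e*a)^2"
  proof -
    have "(C_hat e)^2 = e^2 / (2 + e^2 + 2 * s)"
      using Ch ss s1 by (simp add: power_divide power2_eq_square algebra_simps)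
    also have "\<dots> \<le> e^2 / (4 + e^2)"
      using s1 by (intro divide_left_mono) (auto simp: add_pos_nonneg)
    finally have c2: "(C_hat e)^2 \<le> e^2 / (4 + e^2)" .
    have "(C_hat e * (a+b))^2 = (C_hat e)^2 * (a+b)^2" by (simp add: power_mult_distrib)
    also have "\<dots> \<le> e^2 / (4 + e^2) * (a+b)^2"
      using c2 by (intro mult_right_mono) auto
    also have "\<dots> \<le> (a - b)^2 + (e*a)^2"
    proof -
      have "e^2 * (a+b)^2 + ((2+e^2)*a - 2*b)^2 = (4+e^2)*((a - b)^2 + (e*a)^2)"
        by (simp add: power2_eq_square algebra_simps)
      hence "e^2 * (a+b)^2 \<le> (4+e^2)*((a - b)^2 + (e*a)^2)"
        by (metis le_add_same_cancel1 zero_le_power2)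
      moreover have "(4::real) + e^2 > 0" by (simp add: add_pos_nonneg)
      ultimately show ?thesis by (simp add: field_simps)
    qed
    finally show ?thesis .
  qed
  have low: "C_hat e * (a + b) \<le> sqrt ((a - b)^2 + (e*a)^2)"
    using lowsq C0 a b by (simp add: real_le_rsqrt)
  have up: "sqrt ((a - b)^2 + (e*a)^2) \<le> C_check e * (a + b)"
  proof -
    have "(a - b)^2 + (e*a)^2 \<le> (1 + e^2) * (a+b)^2"
    proof -
      have "(a-b)^2 \<le> (a+b)^2" using a b by (simp add: power2_eq_square algebra_simps)
      moreover have "(e*a)^2 \<le> e^2*(a+b)^2" using a b
        by (simp add: power_mult_distrib mult_left_mono power_mono)
      ultimately show ?thesis by (simp add: algebra_simps)
    qed
    hence "sqrt ((a - b)^2 + (e*a)^2) \<le> sqrt ((1 + e^2) * (a+b)^2)" by simp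
    also have "\<dots> = C_check e * (a+b)" using a b by (simp add: C_check_def real_sqrt_mult)
    finally show ?thesis .
  qed
  show ?thesis using cm low up by simp
qed

theorem lemma1:
  fixes \<epsilon> :: real
    and \<beta> :: "'p \<Rightarrow> real"
    and g :: "'p \<Rightarrow> real^3 \<Rightarrow> real^3 \<Rightarrow> real"
    and \<Omega> :: "'p set"
  assumes "\<epsilon> > 0"
    and "\<forall>x. \<beta> x > 0"
    and "\<forall>x. riem_inner (g x)"
  shows "\<forall>x\<in>\<Omega>. \<forall>\<xi> :: real \<times> (real^3).
           C_hat \<epsilon> * g_R (\<beta> x) (g x) \<xi> \<le> cmod (g_eps \<epsilon> (\<beta> x) (g x) \<xi>)
         \<and> cmod (g_eps \<epsilon> (\<beta> x) (g x) \<xi>) \<le> C_check \<epsilon> * g_R (\<beta> x) (g x) \<xi>"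
proof (intro ballI allI)
  fix x and \<xi> :: "real \<times> (real^3)"
  have ri: "riem_inner (g x)" using assms(3) by blast
  have Gn: "g x (snd \<xi>) (snd \<xi>) \<ge> 0"
  proof (cases "snd \<xi> = 0")
    case True
    have "bilinear (g x)" using ri unfolding riem_inner_def by blast
    hence "linear (g x 0)" unfolding bilinear_def by blast
    hence "g x 0 0 = 0" by (rule linear_0)
    thus ?thesis using True by simp
  next
    case False thus ?thesis using ri unfolding riem_inner_def by (simp add: less_imp_le)
  qed
  have an: "\<beta> x * (fst \<xi>)^2 \<ge> 0" using assms(2) by (simp add: less_imp_le)
  show "C_hat \<epsilon> * g_R (\<beta> x) (g x) \<xi> \<le> cmod (g_eps \<epsilon> (\<beta> x) (g x) \<xi>)
         \<and> cmod (g_eps \<epsilon> (\<beta> x) (g x) \<xi>) \<le> C_check \<epsilon> * g_R (\<beta> x) (g x) \<xi>"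
    unfolding g_R_def g_eps_def using key_ineqs[OF assms(1) an Gn] by simp
qed

end
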